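(* Let $a,b,c\in\mathbb{R}$ with $ac<0$ and $b\neq 0$. Let $\{P_m(z)\}_{m\geq 0}$ be the sequence of functions of $z$ generated by \[ \sum_{m=0}^\infty P_m(z)\, t^m=\frac{1}{(at^2+bt+c)(1-tz)}. \] Then for every $m\geq 0$, all the zeros of $P_m(z)$ lie in the closed disk $\{z\in\mathbb{C}: |z|\leq 1/|\alpha|\}$, where $\alpha$ is the zero of $at^2+bt+c$ of smallest modulus.
   Context: A sequence $\{P_m(z)\}$ is generated by $f(t,z)$ if, for each $z\in\mathbb{C}$, $f(t,z)$ is analytic in $t$ in a neighborhood of $t=0$ and $P_m(z)$ is the coefficient of $t^m$ in the power series expansion of $f(t,z)$ in $t$ about $0$. *)

theory Defs
  imports "HOL-Analysis.Analysis"
begin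

definition generated_by :: "(nat \<Rightarrow> complex \<Rightarrow> complex) \<Rightarrow> (complex \<Rightarrow> complex \<Rightarrow> complex) \<Rightarrow> bool" where
  "generated_by P f \<longleftrightarrow>
     (\<forall>z. (\<lambda>t. f t z) analytic_on {0} \<and>
          (\<forall>m. P m z = (deriv ^^ m) (\<lambda>t. f t z) 0 / fact m))"

end

theory Submission
  imports Defs
begin

fun gg :: "real \<Rightarrow> real \<Rightarrow> nat \<Rightarrow> real" where
  "gg s w 0 = 1" | "gg s w (Suc n) = s^(Suc n) - w * gg s w n"

lemma gg_bounds: "0 \<le> w \<Longrightarrow> w \<le> s \<Longrightarrow> 0 \<le> gg s w n \<and> gg s w n \<le> s^n"
proof (induction n)
  case 0 then show ?case by simp
next
  case (Suc n)
  have "w * gg s w n \<le> s * s^n" using Suc by (simp add: mult_mono)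
  moreover have "0 \<le> w * gg s w n" using Suc by simp
  ultimately show ?case by simp
qed

lemma gg_rec: "gg s w (Suc (Suc n)) = (s - w) * gg s w (Suc n) + s * w * gg s w n"
  by (simp add: algebra_simps)

lemma sum_shift: "(\<Sum>k\<le>Suc m. f k * (z::complex)^(Suc m - k)) = z * (\<Sum>k\<le>m. f k * z^(m-k)) + f (Suc m)"
  by (simp add: sum_distrib_left Suc_diff_le mult_ac)

lemma key_ident:
  fixes u v z :: complex and h :: "nat \<Rightarrow> complex"
  assumes h0: "h 0 = 1" and h1: "h 1 = u + v" and hr: "\<And>n. h (Suc (Suc n)) = (u+v) * h (Suc n) - u * v * h n"
  shows "(z-u)*(z-v)*(\<Sum>k\<le>m. h k * z^(m-k)) = z^(m+2) - h (m+1) * z + u * v * h m"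
proof (induction m)
  case 0 then show ?case using h0 h1 by (simp add: algebra_simps power2_eq_square)
next
  case (Suc m)
  have "(z-u)*(z-v)*(\<Sum>k\<le>Suc m. h k * z^(Suc m-k)) = z*((z-u)*(z-v)*(\<Sum>k\<le>m. h k * z^(m-k))) + (z-u)*(z-v)*h (Suc m)"
    unfolding sum_shift by (simp add: algebra_simps)
  also have "\<dots> = z*(z^(m+2) - h (m+1) * z + u * v * h m) + (z-u)*(z-v)*h (Suc m)" using Suc by simp
  also have "\<dots> = z^(Suc m + 2) - h (Suc m + 1) * z + u * v * h (Suc m)"
    using arg_cong[OF hr[of m], of "\<lambda>x. z*x"] by (simp add: algebra_simps)
  finally show ?case .
qed

lemma geo_fps: "Abs_fps (\<lambda>n. (z::complex)^n) * (1 - fps_X * fps_const z) = 1"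
proof (rule fps_ext)
  fix n
  have "Abs_fps (\<lambda>n. z^n) * (1 - fps_X * fps_const z) = Abs_fps (\<lambda>n. z^n) - fps_const z * (fps_X * Abs_fps (\<lambda>n. z^n))"
    by (simp add: algebra_simps)
  then show "fps_nth (Abs_fps (\<lambda>n. (z::complex)^n) * (1 - fps_X * fps_const z)) n = fps_nth (1::complex fps) n"
    by (cases n) auto
qed

lemma quad_fps:
  fixes a b c u v :: complex and h :: "nat \<Rightarrow> complex"
  assumes c: "c \<noteq> 0" and h0: "h 0 = 1" and h1: "h 1 = u + v"
    and hr: "\<And>n. h (Suc (Suc n)) = (u+v) * h (Suc n) - u * v * h n"
    and hb: "b = - c*(u+v)" and ha: "a = c * u * v"
  shows "(fps_const a * fps_X^2 + fps_const b * fps_X + fps_const c) * Abs_fps (\<lambda>n. h n / c) = 1"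
proof (rule fps_ext)
  fix n
  let ?A = "Abs_fps (\<lambda>n. h n / c)"
  have e: "(fps_const a * fps_X^2 + fps_const b * fps_X + fps_const c) * ?A
      = fps_const a * (fps_X^2 * ?A) + fps_const b * (fps_X * ?A) + fps_const c * ?A"
    by (simp add: algebra_simps)
  show "fps_nth ((fps_const a * fps_X^2 + fps_const b * fps_X + fps_const c) * ?A) n = fps_nth 1 n"
  proof (cases n)
    case 0 then show ?thesis using c h0 unfolding e by (simp add: fps_X_power_mult_nth)
  next
    case (Suc k)
    show ?thesis
    proof (cases k)
      case 0 then show ?thesis using c h0 h1 `n = Suc k` unfolding e
        by (simp add: fps_X_power_mult_nth hb field_simps)
    next
      case (Suc j)
      then show ?thesis using c `n = Suc k` unfolding e
        by (simp add: fps_X_power_mult_nth hr hb ha field_simps)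
    qed
  qed
qed

lemma f_expansion:
  fixes a b c z :: complex
  assumes "c \<noteq> 0"
  shows "(\<lambda>t. 1 / ((a * t^2 + b * t + c) * (1 - t * z))) has_fps_expansion
     inverse ((fps_const a * fps_X^2 + fps_const b * fps_X + fps_const c) * (1 - fps_X * fps_const z))"
proof -
  have "(\<lambda>t. (a * t^2 + b * t + c) * (1 - t * z)) has_fps_expansion
     ((fps_const a * fps_X^2 + fps_const b * fps_X + fps_const c) * (1 - fps_X * fps_const z))"
    by (intro fps_expansion_intros)
  then have "(\<lambda>t. inverse ((a * t^2 + b * t + c) * (1 - t * z))) has_fps_expansion
     inverse ((fps_const a * fps_X^2 + fps_const b * fps_X + fps_const c) * (1 - fps_X * fps_const z))"
    using assms by (intro fps_expansion_intros) auto
  then show ?thesis by (simp add: inverse_eq_divide)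
qed

theorem theorem1:
  fixes a b c :: real and \<alpha> :: complex and P :: "nat \<Rightarrow> complex \<Rightarrow> complex"
  assumes "a * c < 0" and "b \<noteq> 0"
    and "generated_by P (\<lambda>t z. 1 / ((of_real a * t^2 + of_real b * t + of_real c) * (1 - t * z)))"
    and "of_real a * \<alpha>^2 + of_real b * \<alpha> + of_real c = 0"
    and "\<forall>t::complex. of_real a * t^2 + of_real b * t + of_real c = 0 \<longrightarrow> norm \<alpha> \<le> norm t"
  shows "\<forall>m z. P m z = 0 \<longrightarrow> norm z \<le> 1 / norm \<alpha>"
proof (intro allI impI)
  fix m and z :: complex
  assume Pz: "P m z = 0"
  have a0: "a \<noteq> 0" and c0: "c \<noteq> 0" using assms(1) by auto
  have im0: "Im \<alpha> = 0"
  proof (rule ccontr)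
    assume ne: "Im \<alpha> \<noteq> 0"
    define x where "x = Re \<alpha>"
    define y where "y = Im \<alpha>"
    have "Re (of_real a * \<alpha>^2 + of_real b * \<alpha> + of_real c) = 0"
         "Im (of_real a * \<alpha>^2 + of_real b * \<alpha> + of_real c) = 0" using assms(4) by simp_all
    then have e1: "a*(x*x - y*y) + b*x + c = 0" and e2: "y*(2*a*x + b) = 0"
      by (simp_all add: x_def y_def power2_eq_square algebra_simps)
    have "y \<noteq> 0" using ne y_def by simp
    with e2 have "2*a*x + b = 0" by simp
    then have "b = -2*a*x" by simp
    with e1 have "a*(x*x - y*y) - 2*a*x*x + c = 0" by (simp add: algebra_simps)
    then have "a*c = a*a*(x*x + y*y)" by (simp add: algebra_simps)
    moreover have "a*a*(x*x+y*y) \<ge> 0" by simp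
    ultimately show False using assms(1) by linarith
  qed
  define r where "r = Re \<alpha>"
  have ar: "\<alpha> = of_real r" using im0 r_def by (simp add: complex_eq_iff)
  have rroot: "a * r^2 + b * r + c = 0"
  proof -
    have "of_real (a * r^2 + b * r + c) = (0::complex)" using assms(4) ar by simp
    then show ?thesis by (simp only: of_real_eq_0_iff)
  qed
  have r0: "r \<noteq> 0" using rroot c0 by auto
  define \<rho> where "\<rho> = c / (a * r)"
  have \<rho>root: "a * \<rho>^2 + b * \<rho> + c = 0"
  proof -
    have "a * \<rho>^2 + b * \<rho> + c = c / (a * r^2) * (a * r^2 + b * r + c)"
      using a0 r0 by (simp add: \<rho>_def field_simps power2_eq_square)
    then show ?thesis using rroot by simp
  qed
  have "of_real a * (of_real \<rho>)^2 + of_real b * of_real \<rho> + of_real c = (0::complex)"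
  proof -
    have "of_real (a * \<rho>^2 + b * \<rho> + c) = (0::complex)" using \<rho>root by simp
    then show ?thesis by simp
  qed
  then have "norm \<alpha> \<le> norm (of_real \<rho> :: complex)"
    using assms(5) by blast
  then have r\<rho>: "\<bar>r\<bar> \<le> \<bar>\<rho>\<bar>" using ar by simp
  define \<sigma> where "\<sigma> = sgn r"
  define s where "s = 1 / \<bar>r\<bar>"
  define w where "w = \<bar>a * r / c\<bar>"
  have \<sigma>2: "\<sigma> * \<sigma> = 1" using r0 \<sigma>_def by (simp add: sgn_if)
  have w0: "0 \<le> w" using w_def by simp
  have s0: "0 < s" using r0 s_def by simp
  have ws: "w \<le> s"
  proof -
    have "w = 1 / \<bar>\<rho>\<bar>" using w_def \<rho>_def by simp
    then show ?thesis using r\<rho> r0 s_def by (simp add: frac_le)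
  qed
  define U where "U = \<sigma> * s"
  define V where "V = - \<sigma> * w"
  have U: "U = 1 / r" using r0 by (simp add: U_def \<sigma>_def s_def sgn_if)
  have V: "V = a * r / c"
  proof -
    have "a / c < 0" using assms(1) by (simp add: divide_less_0_iff mult_less_0_iff)
    then show ?thesis using r0 by (auto simp: V_def \<sigma>_def w_def sgn_if abs_if divide_less_0_iff mult_less_0_iff zero_less_mult_iff)
  qed
  have UV1: "U + V = - b / c"
  proof -
    have "U + V = (a * r^2 + c) / (r * c)" using U V r0 c0 by (simp add: field_simps power2_eq_square)
    also have "a * r^2 + c = - b * r" using rroot by simp
    finally show ?thesis using r0 by simp
  qed
  have UV2: "U * V = a / c" using U V r0 by simp
  define hR where "hR n = \<sigma>^n * gg s w n" for n
  have hRrec: "hR (Suc (Suc n)) = (U + V) * hR (Suc n) - U * V * hR n" for n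
  proof -
    have "hR (Suc (Suc n)) = \<sigma>^n * (\<sigma>*\<sigma>) * ((s - w) * gg s w (Suc n) + s * w * gg s w n)"
      unfolding hR_def gg_rec by (simp add: algebra_simps)
    also have "\<dots> = \<sigma>^n * ((s - w) * gg s w (Suc n) + s * w * gg s w n)" using \<sigma>2 by simp
    also have "\<dots> = (\<sigma>*\<sigma>) * (\<sigma>^n * ((s - w) * gg s w (Suc n))) + (\<sigma>*\<sigma>) * (\<sigma>^n * (s * w * gg s w n))"
      using \<sigma>2 by (simp add: algebra_simps)
    also have "\<dots> = (U + V) * hR (Suc n) - U * V * hR n"
      unfolding hR_def U_def V_def power_Suc by (simp add: algebra_simps)

    finally show ?thesis .
  qed
  have \<sigma>abs: "\<bar>\<sigma>\<bar> = 1" using r0 by (simp add: \<sigma>_def sgn_if)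
  have hRabs: "\<bar>hR n\<bar> = gg s w n" for n
    using gg_bounds[OF w0 ws, of n] \<sigma>abs by (simp add: hR_def abs_mult power_abs)
  define h where "h n = (of_real (hR n) :: complex)" for n
  define u where "u = (of_real U :: complex)"
  define v where "v = (of_real V :: complex)"
  have h0: "h 0 = 1" by (simp add: h_def hR_def)
  have h1: "h 1 = u + v" by (simp add: h_def hR_def u_def v_def U_def V_def algebra_simps)
  have hr: "h (Suc (Suc n)) = (u+v) * h (Suc n) - u * v * h n" for n
    unfolding h_def u_def v_def hRrec by simp
  have cc0: "(of_real c :: complex) \<noteq> 0" using c0 by simp
  have hb: "(of_real b :: complex) = - of_real c * (u + v)"
  proof -
    have "b = - c * (U + V)" using UV1 c0 by simp
    then show ?thesis by (simp add: u_def v_def)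
  qed
  have ha: "(of_real a :: complex) = of_real c * u * v"
  proof -
    have "a = c * (U * V)" using UV2 c0 by simp
    then show ?thesis by (simp add: u_def v_def)
  qed
  let ?D = "fps_const (of_real a) * fps_X^2 + fps_const (of_real b) * fps_X + fps_const (of_real c :: complex)"
  let ?L = "1 - fps_X * fps_const z"
  have exp: "(\<lambda>t. 1 / ((of_real a * t^2 + of_real b * t + of_real c) * (1 - t * z))) has_fps_expansion inverse (?D * ?L)"
    by (rule f_expansion[OF cc0])
  have "P m z = (deriv ^^ m) (\<lambda>t. 1 / ((of_real a * t^2 + of_real b * t + of_real c) * (1 - t * z))) 0 / fact m"
    using assms(3) unfolding generated_by_def by blast
  also have "\<dots> = fps_nth (inverse (?D * ?L)) m" using fps_nth_fps_expansion[OF exp] by simp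
  also have "inverse (?D * ?L) = Abs_fps (\<lambda>n. h n / of_real c) * Abs_fps (\<lambda>n. z^n)"
  proof (rule fps_inverse_unique)
    have "?D * ?L * (Abs_fps (\<lambda>n. h n / of_real c) * Abs_fps (\<lambda>n. z^n))
        = (?D * Abs_fps (\<lambda>n. h n / of_real c)) * (Abs_fps (\<lambda>n. z^n) * ?L)"
      by (simp add: ac_simps)
    also have "\<dots> = 1" using quad_fps[OF cc0 h0 h1 hr hb ha] geo_fps[of z] by simp
    finally show "?D * ?L * (Abs_fps (\<lambda>n. h n / of_real c) * Abs_fps (\<lambda>n. z^n)) = 1" .
  qed
  finally have "(\<Sum>i=0..m. h i / of_real c * z^(m-i)) = 0" using Pz by (simp add: fps_mult_nth)
  then have "(\<Sum>i=0..m. h i * z^(m-i)) / of_real c = 0"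
    by (simp add: sum_divide_distrib mult.commute mult.left_commute)
  then have "(\<Sum>k\<le>m. h k * z^(m-k)) = 0" using cc0 by (simp add: atLeast0AtMost)
  then have "(z-u)*(z-v)*(\<Sum>k\<le>m. h k * z^(m-k)) = 0" by simp
  then have zeq: "z^(m+2) = h (m+1) * z - u * v * h m"
    unfolding key_ident[OF h0 h1 hr] by (simp add: algebra_simps)
  have na: "1 / norm \<alpha> = s" using ar s_def by simp
  show "norm z \<le> 1 / norm \<alpha>"
  proof (rule ccontr)
    assume "\<not> norm z \<le> 1 / norm \<alpha>"
    then have zs: "s < norm z" using na by simp
    have "norm z ^ (m+2) = norm (h (m+1) * z - u * v * h m)" using zeq by (metis norm_power)
    also have "\<dots> \<le> norm (h (m+1) * z) + norm (u * v * h m)" by (rule norm_triangle_ineq4)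
    also have "\<dots> = gg s w (m+1) * norm z + s * w * gg s w m"
      using hRabs[of "m+1"] hRabs[of m] s0 w0
      by (simp add: h_def u_def v_def norm_mult U_def V_def abs_mult \<sigma>abs)
    also have "\<dots> \<le> gg s w (m+1) * norm z + norm z * w * gg s w m"
      using zs w0 gg_bounds[OF w0 ws, of m] by (intro add_left_mono mult_right_mono) auto
    also have "\<dots> = norm z * s^(m+1)" by (simp add: algebra_simps)
    also have "\<dots> < norm z * norm z ^ (m+1)"
      using zs s0 by (intro mult_strict_left_mono power_strict_mono) auto
    also have "\<dots> = norm z ^ (m+2)" by simp
    finally show False by simp
  qed
qed

end
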